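(* Let $q$ be a prime power and $n\ge 2$. For every integer $r\ge0$ with $r\equiv n\pmod 2$ and $r+2\le n$, we have $c_{r+2}(q,n)<c_r(q,n)$; that is, $c_r(q,n)$ is decreasing in $r$ (over $r$ of the parity of $n$).
   Context: Let ${\mathbb F}_q$ be the finite field of order $q$. A differential on ${\mathbb F}_q^n$ is a linear map $D$ with $D^2=0$; its homology is $\ker D/\operatorname{im}D$, whose dimension has the parity of $n$. $c_r(q,n)$ denotes the number of differentials on ${\mathbb F}_q^n$ whose homology has dimension $r$. *)

theory Defs
  imports "HOL-Analysis.Analysis"
begin

text \<open>A differential on F^n: a linear map D with D o D = 0.\<close>
definition differential :: "('a::field ^ 'n \<Rightarrow> 'a ^ 'n) \<Rightarrow> bool" where
  "differential D \<longleftrightarrow> Vector_Spaces.linear (*s) (*s) D \<and> D \<circ> D = (\<lambda>x. 0)"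

text \<open>Dimension of the homology ker D / im D (im D is a subspace of ker D),
  i.e. dim ker D - dim im D.\<close>
definition homology_dim :: "('a::field ^ 'n \<Rightarrow> 'a ^ 'n) \<Rightarrow> nat" where
  "homology_dim D = vec.dim {x. D x = 0} - vec.dim (range D)"

text \<open>c_r(q,n): number of differentials on F^n with r-dimensional homology,
  where F = 'a (CARD('a) = q) and n = CARD('n).\<close>
definition diff_count :: "'a::{field,finite} itself \<Rightarrow> 'n::finite itself \<Rightarrow> nat \<Rightarrow> nat" where
  "diff_count _ _ r = card {D :: 'a ^ 'n \<Rightarrow> 'a ^ 'n. differential D \<and> homology_dim D = r}"

end

theory Submission
  imports Defs
begin


lemma card_span_indep:
  fixes B :: "('a::{field,finite}^'n) set"
  assumes "vec.independent B"
  shows "card (vec.span B) = CARD('a) ^ card B"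
proof -
  have "finite B" using assms vec.finiteI_independent by blast
  then show ?thesis using assms
  proof (induction B rule: finite_induct)
    case empty
    then show ?case by simp
  next
    case (insert x F)
    have indF: "vec.independent F" and xF: "x \<notin> vec.span F"
      using insert.prems insert.hyps(2) by (auto simp: vec.independent_insert)
    have eq: "vec.span (insert x F) = (\<lambda>(a,v). a *s x + v) ` ((UNIV::'a set) \<times> vec.span F)"
    proof
      show "vec.span (insert x F) \<subseteq> (\<lambda>(a,v). a *s x + v) ` ((UNIV::'a set) \<times> vec.span F)"
      proof
        fix y assume "y \<in> vec.span (insert x F)"
        then obtain k where k: "y - k *s x \<in> vec.span F" by (auto simp: vec.span_insert)
        then show "y \<in> (\<lambda>(a,v). a *s x + v) ` ((UNIV::'a set) \<times> vec.span F)"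
          by (intro image_eqI[where x="(k, y - k *s x)"]) auto
      qed
    next
      show "(\<lambda>(a,v). a *s x + v) ` ((UNIV::'a set) \<times> vec.span F) \<subseteq> vec.span (insert x F)"
      proof (clarsimp simp: vec.span_insert)
        fix a v assume "v \<in> vec.span F"
        then show "\<exists>k. a *s x + v - k *s x \<in> vec.span F" by (intro exI[where x=a]) simp
      qed
    qed
    have inj: "inj_on (\<lambda>(a,v). a *s x + v) ((UNIV::'a set) \<times> vec.span F)"
    proof (rule inj_onI, clarsimp)
      fix a b v w assume v: "v \<in> vec.span F" and w: "w \<in> vec.span F" and e: "a *s x + v = b *s x + w"
      have "(a - b) *s x = w - v" 
      proof -
        have "(a - b) *s x = a *s x - b *s x" by (simp add: vec.scale_left_diff_distrib)
        also have "\<dots> = w - v" using e by (simp add: algebra_simps)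
        finally show ?thesis .
      qed
      show "a = b \<and> v = w"
      proof (cases "a = b")
        case True then show ?thesis using e by simp
      next
        case False
        have "inverse (a - b) *s ((a - b) *s x) = (inverse (a - b) * (a - b)) *s x" by (rule vec.scale_scale)
        moreover have "inverse (a - b) * (a - b) = 1" using False by simp
        ultimately have "x = inverse (a - b) *s ((a - b) *s x)" by simp
        also have "\<dots> \<in> vec.span F" using \<open>(a - b) *s x = w - v\<close> v w
          by (simp add: vec.span_scale vec.span_diff)
        finally show ?thesis using xF by simp
      qed
    qed
    have "card (vec.span (insert x F)) = card ((UNIV::'a set) \<times> vec.span F)"
      unfolding eq using card_image[OF inj] by simp
    also have "\<dots> = CARD('a) * CARD('a) ^ card F" using insert.IH indF by (simp add: card_cartesian_product)
    finally show ?case using insert.hyps by simp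
  qed
qed

lemma card_field_ge2: "CARD('a::{field,finite}) \<ge> 2"
proof -
  have "card {0::'a, 1} = 2" by simp
  moreover have "card {0::'a, 1} \<le> CARD('a)" by (rule card_mono) auto
  ultimately show ?thesis by simp
qed

lemma card_subspace:
  fixes S :: "('a::{field,finite}^'n) set"
  assumes "vec.subspace S"
  shows "card S = CARD('a) ^ vec.dim S"
proof -
  obtain B where B: "B \<subseteq> S" "vec.independent B" "S \<subseteq> vec.span B" "card B = vec.dim S"
    using vec.basis_exists by blast
  have "vec.span B = S" using vec.span_subspace[OF B(1) B(3) assms] .
  then show ?thesis using card_span_indep[OF B(2)] B(4) by simp
qed

lemma card_fiber_sub:
  fixes D :: "'a::{field,finite}^'n \<Rightarrow> 'a^'n"
  assumes lin: "Vector_Spaces.linear (*s) (*s) D" and S: "vec.subspace S" and Y: "Y \<subseteq> D ` S"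
  shows "card {x\<in>S. D x \<in> Y} = card Y * card {x\<in>S. D x = 0}"
proof -
  have fib: "card {x\<in>S. D x = y} = card {x\<in>S. D x = 0}" if "y \<in> Y" for y
  proof -
    obtain x0 where x0: "x0 \<in> S" "y = D x0" using Y \<open>y \<in> Y\<close> by blast
    have "{x\<in>S. D x = y} = (\<lambda>z. z + x0) ` {x\<in>S. D x = 0}"
    proof (intro set_eqI iffI)
      fix x assume "x \<in> {x\<in>S. D x = y}"
      then have "x - x0 \<in> {x\<in>S. D x = 0}" "x = (x - x0) + x0"
        using x0 vec.subspace_diff[OF S] vec.linear_diff[OF lin] by auto
      then show "x \<in> (\<lambda>z. z + x0) ` {x\<in>S. D x = 0}" by blast
    next
      fix x assume "x \<in> (\<lambda>z. z + x0) ` {x\<in>S. D x = 0}"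
      then show "x \<in> {x\<in>S. D x = y}"
        using x0 vec.subspace_add[OF S] vec.linear_add[OF lin] by auto
    qed
    moreover have "inj_on (\<lambda>z. z + x0) {x\<in>S. D x = 0}" by (rule inj_onI) simp
    ultimately show ?thesis by (simp add: card_image)
  qed
  have "{x\<in>S. D x \<in> Y} = (\<Union>y\<in>Y. {x\<in>S. D x = y})" by auto
  then have "card {x\<in>S. D x \<in> Y} = (\<Sum>y\<in>Y. card {x\<in>S. D x = y})"
    by (simp only:) (rule card_UN_disjoint, auto)
  also have "\<dots> = (\<Sum>y\<in>Y. card {x\<in>S. D x = 0})" using fib by (rule sum.cong[OF refl])
  finally show ?thesis by simp
qed

lemma card_vec_UNIV: "CARD('a::{field,finite}^'n) = CARD('a) ^ CARD('n)"
  using card_subspace[OF vec.subspace_UNIV, where 'a='a and 'n='n] vec_dim_card by simp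

lemma rank_nullity:
  fixes D :: "'a::{field,finite}^'n \<Rightarrow> 'a^'n"
  assumes lin: "Vector_Spaces.linear (*s) (*s) D"
  shows "vec.dim (range D) + vec.dim {x. D x = 0} = CARD('n)"
proof -
  have "card (UNIV::('a^'n) set) = card (range D) * card {x. D x = 0}"
    using card_fiber_sub[OF lin vec.subspace_UNIV, of "range D"] by simp
  also have "\<dots> = CARD('a) ^ (vec.dim (range D) + vec.dim {x. D x = 0})"
    using card_subspace[OF vec.linear_subspace_image[OF lin vec.subspace_UNIV]]
      card_subspace[OF vec.linear_subspace_kernel[OF lin]] by (simp add: power_add)
  finally have "CARD('a) ^ CARD('n) = CARD('a) ^ (vec.dim (range D) + vec.dim {x. D x = 0})"
    by (simp add: card_vec_UNIV)
  moreover have "CARD('a) > 1" using card_field_ge2[where 'a='a] by simp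
  ultimately show ?thesis by simp
qed

definition indlists :: "('a::field^'n \<Rightarrow> 'a^'n) \<Rightarrow> ('a^'n) set \<Rightarrow> nat \<Rightarrow> ('a^'n) list set" where
  "indlists D W m = {v. length v = m \<and> distinct (map D v) \<and> vec.independent (set (map D v)) \<and> set (map D v) \<subseteq> W}"

lemma indlists_Cons:
  "x # v \<in> indlists D W (Suc m) \<longleftrightarrow> v \<in> indlists D W m \<and> D x \<in> W - vec.span (set (map D v))"
  unfolding indlists_def using vec.span_base[of _ "set (map D v)"]
  by (auto simp: vec.independent_insert)

lemma indlists_Suc:
  "indlists D W (Suc m) = (\<lambda>(v,x). x # v) ` (SIGMA v: indlists D W m. {x. D x \<in> W - vec.span (set (map D v))})"
proof (intro set_eqI iffI)
  fix u assume u: "u \<in> indlists D W (Suc m)"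
  then obtain x v where "u = x # v" unfolding indlists_def by (cases u) auto
  then show "u \<in> (\<lambda>(v,x). x # v) ` (SIGMA v: indlists D W m. {x. D x \<in> W - vec.span (set (map D v))})"
    using u indlists_Cons[of x v D W m] by (auto intro!: image_eqI[where x="(v,x)"])
next
  fix u assume "u \<in> (\<lambda>(v,x). x # v) ` (SIGMA v: indlists D W m. {x. D x \<in> W - vec.span (set (map D v))})"
  then show "u \<in> indlists D W (Suc m)" by (auto simp: indlists_Cons)
qed

lemma card_indlists:
  fixes D :: "'a::{field,finite}^'n \<Rightarrow> 'a^'n"
  assumes lin: "Vector_Spaces.linear (*s) (*s) D" and W: "vec.subspace W" "W \<subseteq> range D"
  shows "card (indlists D W m) = (\<Prod>i<m. (CARD('a) ^ vec.dim W - CARD('a) ^ i) * card {x. D x = 0})"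
proof (induction m)
  case 0
  have "indlists D W 0 = {[]}" unfolding indlists_def by (auto simp: vec.independent_empty)
  then show ?case by simp
next
  case (Suc m)
  have inj: "inj_on (\<lambda>(v,x). x # v) (SIGMA v: indlists D W m. {x. D x \<in> W - vec.span (set (map D v))})"
    by (rule inj_onI) auto
  have fin: "finite (indlists D W m)"
  proof -
    have "indlists D W m \<subseteq> {v. set v \<subseteq> UNIV \<and> length v = m}" by (auto simp: indlists_def)
    moreover have "finite {v. set v \<subseteq> (UNIV::('a^'n) set) \<and> length v = m}"
      by (rule finite_lists_length_eq) simp
    ultimately show ?thesis by (rule finite_subset)
  qed
  have each: "card {x. D x \<in> W - vec.span (set (map D v))} = (CARD('a) ^ vec.dim W - CARD('a) ^ m) * card {x. D x = 0}"
    if v: "v \<in> indlists D W m" for v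
  proof -
    let ?T = "vec.span (set (map D v))"
    have sub: "?T \<subseteq> W" using v W(1) vec.span_minimal[of "set (map D v)" W] by (auto simp: indlists_def)
    have cT: "card ?T = CARD('a) ^ m"
      using v card_span_indep[of "set (map D v)"] distinct_card[of "map D v"] by (auto simp: indlists_def)
    have "card {x\<in>UNIV. D x \<in> W - ?T} = card (W - ?T) * card {x\<in>UNIV. D x = 0}"
      by (rule card_fiber_sub[OF lin vec.subspace_UNIV]) (use W(2) in auto)
    moreover have "card (W - ?T) = CARD('a) ^ vec.dim W - CARD('a) ^ m"
      using card_Diff_subset[OF _ sub] cT card_subspace[OF W(1)] by simp
    ultimately show ?thesis by simp
  qed
  have "card (indlists D W (Suc m)) = card (SIGMA v: indlists D W m. {x. D x \<in> W - vec.span (set (map D v))})"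
    unfolding indlists_Suc by (rule card_image[OF inj])
  also have "\<dots> = (\<Sum>v\<in>indlists D W m. card {x. D x \<in> W - vec.span (set (map D v))})"
    using fin by simp
  also have "\<dots> = (\<Sum>v\<in>indlists D W m. (CARD('a) ^ vec.dim W - CARD('a) ^ m) * card {x. D x = 0})"
    using each by (rule sum.cong[OF refl])
  also have "\<dots> = card (indlists D W m) * ((CARD('a) ^ vec.dim W - CARD('a) ^ m) * card {x. D x = 0})"
    by simp
  finally show ?case using Suc.IH by (simp add: mult.commute)
qed

lemma differentialD:
  assumes "differential D"
  shows "Vector_Spaces.linear (*s) (*s) D" "\<And>x. D (D x) = 0"
  using assms unfolding differential_def by (auto dest: fun_cong[where x=x for x])

lemma pair_indep:
  fixes D :: "'a::{field,finite}^'n \<Rightarrow> 'a^'n"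
  assumes dD: "differential D" and v: "v \<in> indlists D (range D) k"
  shows "v @ map D v \<in> indlists id UNIV (2*k)"
proof -
  have lin: "Vector_Spaces.linear (*s) (*s) D" and DD: "\<And>x. D (D x) = 0"
    using differentialD[OF dD] by auto
  define w where "w = map D v"
  define X where "X = set (v @ w)"
  define S where "S = vec.span X"
  have lv: "length v = k" and dw: "distinct w" and iw: "vec.independent (set w)"
    using v by (auto simp: indlists_def w_def)
  have lw: "length w = k" using lv by (simp add: w_def)
  have cw: "card (set w) = k" using distinct_card[OF dw] lw by simp
  have cW: "card (vec.span (set w)) = CARD('a) ^ k" using card_span_indep[OF iw] cw by simp
  have XS: "X \<subseteq> S" unfolding S_def by (rule vec.span_superset)
  have fS: "finite S" by simp
  have sub1: "vec.span (set w) \<subseteq> D ` S"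
  proof (rule vec.span_minimal)
    show "set w \<subseteq> D ` S" using XS by (auto simp: w_def X_def)
    show "vec.subspace (D ` S)" unfolding S_def
      by (rule vec.linear_subspace_image[OF lin vec.subspace_span])
  qed
  have sub2: "vec.span (set w) \<subseteq> {x\<in>S. D x = 0}"
  proof (rule vec.span_minimal)
    show "set w \<subseteq> {x\<in>S. D x = 0}" using XS DD by (auto simp: w_def X_def)
    have "{x\<in>S. D x = 0} = S \<inter> {x. D x = 0}" by auto
    then show "vec.subspace {x\<in>S. D x = 0}" unfolding S_def
      using vec.subspace_inter[OF vec.subspace_span vec.linear_subspace_kernel[OF lin]] by simp
  qed
  have "card S = card {x\<in>S. D x \<in> D ` S}" by (rule arg_cong[where f=card]) auto
  also have "\<dots> = card (D ` S) * card {x\<in>S. D x = 0}"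
    by (rule card_fiber_sub[OF lin]) (auto simp: S_def)
  finally have cS: "card S = card (D ` S) * card {x\<in>S. D x = 0}" .
  have "CARD('a) ^ k * CARD('a) ^ k \<le> card (D ` S) * card {x\<in>S. D x = 0}"
    using card_mono[OF _ sub1] card_mono[OF _ sub2] cW by (simp add: mult_le_mono)
  then have "CARD('a) ^ (2*k) \<le> CARD('a) ^ vec.dim S"
    using cS card_subspace[of S] by (simp add: S_def mult_2 power_add)
  then have dimS: "2*k \<le> vec.dim S"
    using card_field_ge2[where 'a='a] by (simp add: power_le_imp_le_exp)
  have "vec.dim S \<le> card X" using vec.dim_le_card[of S X] by (simp add: S_def)
  moreover have "card X \<le> 2*k" using card_length[of "v @ w"] lv lw by (simp add: X_def)
  ultimately have cX: "card X = 2*k" "card X = vec.dim S" using dimS by auto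
  have dist: "distinct (v @ w)" using card_distinct[of "v @ w"] cX lv lw by (simp add: X_def)
  have ind: "vec.independent X"
    using vec.card_eq_dim[OF XS cX(2)] by (simp add: S_def)
  show ?thesis using dist ind lv lw by (simp add: indlists_def X_def w_def)
qed



lemma card_F:
  fixes v w :: "('a::{field,finite}^'n) list"
  assumes vw: "v @ w \<in> indlists id UNIV (2*k)" and lv: "length v = k"
  shows "card {D. differential D \<and> vec.dim (range D) = k \<and> map D v = w} = (CARD('a)^k) ^ (CARD('n) - 2*k)"
proof -
  define X where "X = set (v @ w)"
  have lw: "length w = k" using vw lv by (simp add: indlists_def)
  have dist: "distinct (v @ w)" and indX: "vec.independent X"
    using vw by (auto simp: indlists_def X_def)
  have dv: "distinct v" and dw: "distinct w" and disj: "set v \<inter> set w = {}" using dist by auto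
  have cX: "card X = 2*k" using distinct_card[OF dist] lv lw by (simp add: X_def)
  define E where "E = vec.extend_basis X"
  have XE: "X \<subseteq> E" and indE: "vec.independent E" and spE: "vec.span E = UNIV"
    using vec.extend_basis_superset[OF indX] vec.independent_extend_basis[OF indX]
      vec.span_extend_basis[OF indX] by (auto simp: E_def)
  have fE: "finite E" by simp
  have cE: "card E = CARD('n)"
    using vec.basis_card_eq_dim[of E UNIV] indE spE vec_dim_card[where 'a='a and 'n='n] by simp
  define C where "C = E - X"
  have cC: "card C = CARD('n) - 2*k" unfolding C_def using card_Diff_subset[OF _ XE] cX cE by simp
  define W where "W = vec.span (set w)"
  have indw: "vec.independent (set w)" using vec.independent_mono[OF indX] by (auto simp: X_def)
  have cw: "card (set w) = k" using distinct_card[OF dw] lw by simp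
  have cW: "card W = CARD('a) ^ k" using card_span_indep[OF indw] cw by (simp add: W_def)
  have dimW: "vec.dim W = k" using vec.dim_span_eq_card_independent[OF indw] cw by (simp add: W_def)
  define F where "F = {D. differential D \<and> vec.dim (range D) = k \<and> map D v = w}"
  have Fprops: "Vector_Spaces.linear (*s) (*s) D \<and> (\<forall>i<k. D (v!i) = w!i) \<and> (\<forall>i<k. D (w!i) = 0) \<and> range D = W"
    if "D \<in> F" for D
  proof -
    have dD: "differential D" and rk: "vec.dim (range D) = k" and mv: "map D v = w"
      using that by (auto simp: F_def)
    note lin = differentialD(1)[OF dD] and DD = differentialD(2)[OF dD]
    have Dv: "\<forall>i<k. D (v!i) = w!i" using mv lv by (metis nth_map)
    have Dw: "\<forall>i<k. D (w!i) = 0" using Dv DD by metis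
    have sr: "vec.subspace (range D)" by (rule vec.linear_subspace_image[OF lin vec.subspace_UNIV])
    have "set w \<subseteq> range D" using Dv lw by (metis in_set_conv_nth rangeI subsetI)
    then have WR: "W \<subseteq> range D" unfolding W_def using vec.span_minimal sr by blast
    have "card (range D) = CARD('a) ^ k" using card_subspace[OF sr] rk by simp
    then have "W = range D" using card_subset_eq[OF _ WR] cW by simp
    then show ?thesis using lin Dv Dw by simp
  qed
  have bij: "bij_betw (\<lambda>D. restrict D C) F (C \<rightarrow>\<^sub>E W)"
  proof (rule bij_betwI')
    fix D1 D2 assume D1: "D1 \<in> F" and D2: "D2 \<in> F"
    show "(restrict D1 C = restrict D2 C) = (D1 = D2)"
    proof
      assume eq: "restrict D1 C = restrict D2 C"
      have onE: "D1 b = D2 b" if "b \<in> E" for b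
      proof (cases "b \<in> C")
        case True then show ?thesis using fun_cong[OF eq, of b] by simp
      next
        case False
        then have "b \<in> set v \<or> b \<in> set w" using that by (auto simp: C_def X_def)
        then show ?thesis
        proof
          assume "b \<in> set v" then obtain i where "i < k" "b = v!i" using lv by (metis in_set_conv_nth)
          then show ?thesis using Fprops[OF D1] Fprops[OF D2] by simp
        next
          assume "b \<in> set w" then obtain i where "i < k" "b = w!i" using lw by (metis in_set_conv_nth)
          then show ?thesis using Fprops[OF D1] Fprops[OF D2] by simp
        qed
      qed
      show "D1 = D2"
      proof
        fix x
        have "x \<in> vec.span E" using spE by simp
        then show "D1 x = D2 x" using vec.linear_eq_on[of D1 D2 x E] Fprops[OF D1] Fprops[OF D2] onE by blast
      qed
    qed simp
  next
    fix D assume "D \<in> F"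
    then show "restrict D C \<in> C \<rightarrow>\<^sub>E W" using Fprops[of D] by auto
  next
    fix g assume g: "g \<in> C \<rightarrow>\<^sub>E W"
    define h where "h b = (if b \<in> C then g b else if b \<in> set v then w ! (THE i. i < k \<and> v!i = b) else 0)" for b
    define D where "D = vec.construct E h"
    have lin: "Vector_Spaces.linear (*s) (*s) D" unfolding D_def by (rule vec.linear_construct[OF indE])
    have DE: "D b = h b" if "b \<in> E" for b unfolding D_def by (rule vec.construct_basis[OF indE that])
    have THE_i: "(THE j. j < k \<and> v!j = v!i) = i" if "i < k" for i
    proof (rule the_equality)
      show "i < k \<and> v!i = v!i" using that by simp
    next
      fix j assume "j < k \<and> v!j = v!i"
      then show "j = i" using nth_eq_iff_index_eq[OF dv] that lv by auto
    qed
    have DV: "D (v!i) = w!i" if "i < k" for i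
    proof -
      have "v!i \<in> X" "v!i \<in> set v" using that lv by (auto simp: X_def)
      then have "v!i \<in> E" "v!i \<notin> C" using XE by (auto simp: C_def)
      then have "D (v!i) = h (v!i)" using DE by blast
      also have "\<dots> = w ! (THE j. j < k \<and> v!j = v!i)" using \<open>v!i \<notin> C\<close> \<open>v!i \<in> set v\<close> by (simp add: h_def)
      finally show ?thesis using THE_i[OF that] by simp
    qed
    have DW: "D (w!i) = 0" if "i < k" for i
    proof -
      have "w!i \<in> X" "w!i \<notin> set v" using that lw disj by (auto simp: X_def)
      then have "w!i \<in> E" "w!i \<notin> C" using XE by (auto simp: C_def)
      then have "D (w!i) = h (w!i)" using DE by blast
      then show ?thesis using \<open>w!i \<notin> C\<close> \<open>w!i \<notin> set v\<close> by (simp add: h_def)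
    qed
    have DC: "D c = g c" if "c \<in> C" for c
    proof -
      have "c \<in> E" using that by (simp add: C_def)
      then have "D c = h c" using DE by blast
      then show ?thesis using that by (simp add: h_def)
    qed
    have sW: "vec.subspace W" by (simp add: W_def)
    have DEW: "D ` E \<subseteq> W"
    proof
      fix y assume "y \<in> D ` E"
      then obtain b where b: "b \<in> E" "y = D b" by blast
      show "y \<in> W"
      proof (cases "b \<in> C")
        case True then show ?thesis using DC g b by auto
      next
        case False
        then have "b \<in> set v \<or> b \<in> set w" using b by (auto simp: C_def X_def)
        then show ?thesis
        proof
          assume "b \<in> set v" then obtain i where "i < k" "b = v!i" using lv by (metis in_set_conv_nth)
          then show ?thesis using DV b lw by (auto simp: W_def intro!: vec.span_base)
        next
          assume "b \<in> set w" then obtain i where "i < k" "b = w!i" using lw by (metis in_set_conv_nth)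
          then show ?thesis using DW b by (auto simp: W_def vec.span_zero)
        qed
      qed
    qed
    have "range D = vec.span (D ` E)" using vec.linear_span_image[OF lin, of E] spE by simp
    then have RW: "range D \<subseteq> W" using vec.span_minimal[OF DEW sW] by simp
    have "set w \<subseteq> range D" using DV lw by (metis in_set_conv_nth rangeI subsetI)
    then have "W \<subseteq> range D" unfolding W_def
      using vec.span_minimal vec.linear_subspace_image[OF lin vec.subspace_UNIV] by blast
    then have RW': "range D = W" using RW by blast
    have DD: "D (D x) = 0" for x
    proof -
      have "D x \<in> vec.span (set w)" using RW' by (auto simp: W_def[symmetric])
      moreover have "\<And>b. b \<in> set w \<Longrightarrow> D b = 0" using DW lw by (metis in_set_conv_nth)
      ultimately show ?thesis using vec.linear_eq_0_on_span[OF lin, where b="set w" and x="D x"] by blast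
    qed
    have mv: "map D v = w" by (rule nth_equalityI) (use DV lv lw in auto)
    have "D \<circ> D = (\<lambda>x. 0)" using DD by (simp add: fun_eq_iff)
    then have "differential D" using lin by (simp add: differential_def)
    then have "D \<in> F" unfolding F_def using RW' dimW mv by simp
    moreover have "restrict D C = g"
    proof
      fix x show "restrict D C x = g x" by (cases "x \<in> C") (simp_all add: DC PiE_arb[OF g])
    qed
    ultimately show "\<exists>D\<in>F. g = restrict D C" by (intro bexI[of _ D]) simp_all
  qed
  have "card F = card (C \<rightarrow>\<^sub>E W)" by (rule bij_betw_same_card[OF bij])
  also have "\<dots> = (CARD('a)^k) ^ card C" by (simp add: card_PiE cW)
  finally show ?thesis using cC by (simp add: F_def)
qed



lemma finite_indlists: "finite (indlists (D::'a::{field,finite}^'n \<Rightarrow> 'a^'n) W m)"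
proof -
  have "indlists D W m \<subseteq> {v. set v \<subseteq> UNIV \<and> length v = m}" by (auto simp: indlists_def)
  moreover have "finite {v. set v \<subseteq> (UNIV::('a^'n) set) \<and> length v = m}"
    by (rule finite_lists_length_eq) simp
  ultimately show ?thesis by (rule finite_subset)
qed

lemma card_eq_sum_fibers:
  assumes "finite A" "finite B" "f ` A \<subseteq> B"
  shows "card A = (\<Sum>b\<in>B. card {a\<in>A. f a = b})"
proof -
  have eq: "A = (\<Union>b\<in>B. {a\<in>A. f a = b})" using assms(3) by auto
  have "card (\<Union>b\<in>B. {a\<in>A. f a = b}) = (\<Sum>b\<in>B. card {a\<in>A. f a = b})"
    by (rule card_UN_disjoint) (use assms in auto)
  then show ?thesis using eq by simp
qed

definition Sk :: "'a::{field,finite} itself \<Rightarrow> 'n::finite itself \<Rightarrow> nat \<Rightarrow> ('a^'n \<Rightarrow> 'a^'n) set" where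
  "Sk _ _ k = {D. differential D \<and> vec.dim (range D) = k}"

lemma count_eq:
  "card (Sk TYPE('a::{field,finite}) TYPE('n::finite) k) * (\<Prod>i<k. (CARD('a)^k - CARD('a)^i) * CARD('a)^(CARD('n)-k))
   = (\<Prod>i<2*k. (CARD('a)^CARD('n) - CARD('a)^i) * 1) * (CARD('a)^k)^(CARD('n)-2*k)"
proof -
  let ?S = "Sk TYPE('a) TYPE('n) k"
  let ?A = "\<Prod>i<k. (CARD('a)^k - CARD('a)^i) * CARD('a)^(CARD('n)-k)"
  define T where "T = (SIGMA D: ?S. indlists D (range D) k)"
  define U where "U = {(v,w). v @ w \<in> indlists (id::'a^'n \<Rightarrow> 'a^'n) UNIV (2*k) \<and> length v = k}"
  have cA: "card (indlists D (range D) k) = ?A" if "D \<in> ?S" for D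
  proof -
    have dD: "differential D" and rk: "vec.dim (range D) = k" using that by (auto simp: Sk_def)
    note lin = differentialD(1)[OF dD]
    have sr: "vec.subspace (range D)" by (rule vec.linear_subspace_image[OF lin vec.subspace_UNIV])
    have "card {x. D x = 0} = CARD('a) ^ (CARD('n) - k)"
    proof -
      have "vec.dim {x. D x = 0} = CARD('n) - k" using rank_nullity[OF lin] rk by linarith
      then show ?thesis using card_subspace[OF vec.linear_subspace_kernel[OF lin]] by simp
    qed
    then show ?thesis using card_indlists[OF lin sr subset_refl] rk by simp
  qed
  have "card T = (\<Sum>D\<in>?S. card (indlists D (range D) k))"
    unfolding T_def by (rule card_SigmaI) (simp_all add: finite_indlists)
  also have "\<dots> = card ?S * ?A" using cA by simp
  finally have T1: "card T = card ?S * ?A" .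
  define \<phi> where "\<phi> = (\<lambda>(D::'a^'n \<Rightarrow> 'a^'n, v::('a^'n) list). (v, map D v))"
  have finT: "finite T" unfolding T_def by (simp add: finite_indlists)
  have finU: "finite U"
  proof -
    have "U \<subseteq> (\<lambda>x. (take k x, drop k x)) ` indlists (id::'a^'n \<Rightarrow> 'a^'n) UNIV (2*k)"
      unfolding U_def by (auto intro!: image_eqI)
    then show ?thesis using finite_indlists finite_surj by blast
  qed
  have img: "\<phi> ` T \<subseteq> U"
  proof
    fix u assume "u \<in> \<phi> ` T"
    then obtain D v where "D \<in> ?S" "v \<in> indlists D (range D) k" "u = (v, map D v)"
      unfolding T_def \<phi>_def by auto
    then show "u \<in> U" using pair_indep[of D v k] by (auto simp: U_def Sk_def indlists_def)
  qed
  have fib: "card {t\<in>T. \<phi> t = u} = (CARD('a)^k)^(CARD('n)-2*k)" if u: "u \<in> U" for u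
  proof -
    obtain v w where uvw: "u = (v,w)" by (cases u)
    have vw: "v @ w \<in> indlists id UNIV (2*k)" and lv: "length v = k" using u uvw by (auto simp: U_def)
    define F where "F = {D. differential D \<and> vec.dim (range D) = k \<and> map D v = w}"
    have "{t\<in>T. \<phi> t = u} = (\<lambda>D. (D,v)) ` F"
    proof (intro set_eqI iffI)
      fix t assume "t \<in> {t\<in>T. \<phi> t = u}"
      then show "t \<in> (\<lambda>D. (D,v)) ` F" unfolding T_def \<phi>_def F_def Sk_def uvw by auto
    next
      fix t assume "t \<in> (\<lambda>D. (D,v)) ` F"
      then obtain D where D: "D \<in> F" "t = (D,v)" by blast
      have lw: "length w = k" using vw lv by (simp add: indlists_def)
      have "distinct w" "vec.independent (set w)"
        using vw vec.independent_mono[of "set (v @ w)" "set w"] by (auto simp: indlists_def)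
      moreover have "set w \<subseteq> range D" using D(1) by (auto simp: F_def)
      ultimately have "v \<in> indlists D (range D) k" using D(1) lv by (auto simp: indlists_def F_def)
      then show "t \<in> {t\<in>T. \<phi> t = u}" using D unfolding T_def \<phi>_def F_def Sk_def uvw by auto
    qed
    moreover have "inj_on (\<lambda>D. (D,v)) F" by (rule inj_onI) simp
    ultimately have "card {t\<in>T. \<phi> t = u} = card F" using card_image by metis
    also have "\<dots> = (CARD('a)^k)^(CARD('n)-2*k)" unfolding F_def by (rule card_F[OF vw lv])
    finally show ?thesis .
  qed
  have "card T = (\<Sum>u\<in>U. card {t\<in>T. \<phi> t = u})" by (rule card_eq_sum_fibers[OF finT finU img])
  also have "\<dots> = (\<Sum>u\<in>U. (CARD('a)^k)^(CARD('n)-2*k))" by (rule sum.cong[OF refl fib])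
  also have "\<dots> = card U * (CARD('a)^k)^(CARD('n)-2*k)" by simp
  finally have T2: "card T = card U * (CARD('a)^k)^(CARD('n)-2*k)" .
  have "bij_betw (\<lambda>(v,w). v @ w) U (indlists (id::'a^'n \<Rightarrow> 'a^'n) UNIV (2*k))"
  proof (rule bij_betwI')
    fix x y assume xU: "x \<in> U" and yU: "y \<in> U"
    obtain a b where ab: "x = (a,b)" by (cases x)
    obtain c d where cd: "y = (c,d)" by (cases y)
    have "length a = k" "length c = k" using xU yU ab cd by (auto simp: U_def)
    then have "(a @ b = c @ d) = (a = c \<and> b = d)" by (intro append_eq_append_conv) simp
    then show "((case x of (v, w) \<Rightarrow> v @ w) = (case y of (v, w) \<Rightarrow> v @ w)) = (x = y)"
      using ab cd by simp
  next
    fix x assume "x \<in> U" then show "(case x of (v, w) \<Rightarrow> v @ w) \<in> indlists id UNIV (2 * k)"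
      by (auto simp: U_def)
  next
    fix y assume y: "y \<in> indlists (id::'a^'n \<Rightarrow> 'a^'n) UNIV (2 * k)"
    have "length y = 2*k" using y by (simp add: indlists_def)
    then have "(take k y, drop k y) \<in> U" unfolding U_def mem_Collect_eq case_prod_conv append_take_drop_id
      using y by simp
    then show "\<exists>x\<in>U. y = (case x of (v, w) \<Rightarrow> v @ w)" by force
  qed
  then have "card U = card (indlists (id::'a^'n \<Rightarrow> 'a^'n) UNIV (2*k))" by (rule bij_betw_same_card)
  also have "\<dots> = (\<Prod>i<2*k. (CARD('a)^CARD('n) - CARD('a)^i) * 1)"
  proof -
    have lin: "Vector_Spaces.linear (*s) (*s) (id::'a^'n \<Rightarrow> 'a^'n)" by (rule vec.linear_id)
    have "card {x::'a^'n. id x = 0} = 1" by simp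
    then show ?thesis using card_indlists[OF lin vec.subspace_UNIV, of "2*k"] vec_dim_card[where 'a='a and 'n='n]
      by simp
  qed
  finally show ?thesis using T1 T2 by simp
qed



lemma A_Suc:
  fixes q n j :: nat
  assumes "Suc j \<le> n"
  shows "(\<Prod>i<Suc j. (q^Suc j - q^i) * q^(n - Suc j))
       = ((q^Suc j - 1) * q^(n - Suc j)) * (\<Prod>i<j. (q^j - q^i) * q^(n-j))"
proof -
  have "(\<Prod>i<Suc j. (q^Suc j - q^i) * q^(n - Suc j))
      = ((q^Suc j - q^0) * q^(n - Suc j)) * (\<Prod>i<j. (q^Suc j - q^Suc i) * q^(n - Suc j))"
    by (rule prod.lessThan_Suc_shift)
  also have "(\<Prod>i<j. (q^Suc j - q^Suc i) * q^(n - Suc j)) = (\<Prod>i<j. (q^j - q^i) * q^(n-j))"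
  proof (rule prod.cong[OF refl])
    fix i
    have "n - j = Suc (n - Suc j)" using assms by simp
    then have "(q^Suc j - q^Suc i) * q^(n - Suc j) = (q^j - q^i) * (q * q^(n - Suc j))"
      by (simp add: diff_mult_distrib2 diff_mult_distrib mult_ac)
    also have "\<dots> = (q^j - q^i) * q^(n-j)" using \<open>n - j = _\<close> by simp
    finally show "(q^Suc j - q^Suc i) * q^(n - Suc j) = (q^j - q^i) * q^(n-j)" .
  qed
  finally show ?thesis by simp
qed

lemma key_ineq:
  fixes q j r :: nat
  assumes q: "q \<ge> 2"
  shows "((q^(r+2+2*j) - q^(2*j)) * (q^(r+2+2*j) - q^(2*j+1))) * (q^Suc j)^r
         > ((q^Suc j - 1) * q^(r+2+2*j - Suc j)) * (q^j)^(r+2)"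
proof -
  have e1: "q^(r+2+2*j) - q^(2*j) = q^(2*j) * (q^(r+2) - 1)"
    by (simp add: diff_mult_distrib2 power_add mult_ac)
  have e2: "q^(r+2+2*j) - q^(2*j+1) = q^(2*j+1) * (q^(r+1) - 1)"
    by (simp add: diff_mult_distrib2 power_add mult_ac)
  define X where "X = (q^(r+2) - 1) * (q^(r+1) - 1)"
  have "q^(r+2) \<ge> q^2" using q by (intro power_increasing) auto
  moreover have "q^2 \<ge> q + 1"
  proof -
    have "q * q \<ge> 2 * q" by (rule mult_right_mono[OF q]) simp
    then show ?thesis using q unfolding power2_eq_square by linarith
  qed
  ultimately have X1: "q^(r+2) - 1 \<ge> q" by simp
  have "q^(r+1) \<ge> q" using power_increasing[of 1 "r+1" q] q by simp
  then have X2: "q^(r+1) - 1 \<ge> 1" using q by linarith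
  have X: "X \<ge> q" unfolding X_def using mult_le_mono[OF X1 X2] by simp
  have "q^j * X \<ge> q^j * q" using X by simp
  then have h1: "q^j * X \<ge> q^Suc j" by (simp add: mult.commute)
  have "q^Suc j \<ge> 1" using q by simp
  then have lt: "q^j * X > q^Suc j - 1" using h1 by linarith
  have P: "q^(j*r + 3*j + r + 1) > 0" using q by simp
  have "r + 2 + 2*j - Suc j = r + j + 1" by simp
  have pw1: "q^(r+j+1) * (q^j)^(r+2) = q^(j*r + 3*j + r + 1)"
  proof -
    have "q^(r+j+1) * (q^j)^(r+2) = q^(r+j+1 + j*(r+2))" by (simp add: power_mult power_add)
    also have "r+j+1 + j*(r+2) = j*r + 3*j + r + 1" by (simp add: algebra_simps)
    finally show ?thesis .
  qed
  have rhs: "((q^Suc j - 1) * q^(r+2+2*j - Suc j)) * (q^j)^(r+2) = q^(j*r + 3*j + r + 1) * (q^Suc j - 1)"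
    using \<open>r + 2 + 2*j - Suc j = r + j + 1\<close> pw1 by (metis mult.assoc mult.commute)
  have pw2: "q^(2*j) * q^(2*j+1) * (q^Suc j)^r = q^(j*r + 3*j + r + 1) * q^j"
  proof -
    have "q^(2*j) * q^(2*j+1) * (q^Suc j)^r = q^(2*j + (2*j+1) + Suc j * r)" by (simp only: power_add power_mult)
    also have "2*j + (2*j+1) + Suc j * r = (j*r + 3*j + r + 1) + j" by (simp add: algebra_simps)
    also have "q^((j*r + 3*j + r + 1) + j) = q^(j*r + 3*j + r + 1) * q^j" by (rule power_add)
    finally show ?thesis .
  qed
  have lhs: "((q^(r+2+2*j) - q^(2*j)) * (q^(r+2+2*j) - q^(2*j+1))) * (q^Suc j)^r = q^(j*r + 3*j + r + 1) * (q^j * X)"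
  proof -
    have "((q^(r+2+2*j) - q^(2*j)) * (q^(r+2+2*j) - q^(2*j+1))) * (q^Suc j)^r
        = (q^(2*j) * q^(2*j+1) * (q^Suc j)^r) * X" unfolding e1 e2 X_def by (simp only: mult_ac)
    also have "\<dots> = q^(j*r + 3*j + r + 1) * (q^j * X)" unfolding pw2 by (simp only: mult_ac)
    finally show ?thesis .
  qed
  show ?thesis unfolding lhs rhs using mult_strict_left_mono[OF lt P] by simp
qed



lemma final_arith:
  fixes s1 s2 A R I M E1 E2 :: nat
  assumes h1: "s1 * A = I * E1" and h2: "s2 * (R * A) = (I * M) * E2"
    and lt: "M * E2 > R * E1" and I: "I > 0" and E: "E1 > 0"
  shows "s1 < s2"
proof (rule ccontr)
  assume "\<not> s1 < s2"
  then have "s2 \<le> s1" by simp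
  then have "s2 * (R * A * E1) \<le> s1 * (R * A * E1)" by (rule mult_right_mono) simp
  moreover have "s2 * (R * A * E1) = (I * E1) * (M * E2)"
  proof -
    have "s2 * (R * A * E1) = (s2 * (R * A)) * E1" by (simp only: mult.assoc)
    also have "\<dots> = (I * M * E2) * E1" by (simp only: h2)
    also have "\<dots> = (I * E1) * (M * E2)" by (simp only: mult_ac)
    finally show ?thesis .
  qed
  moreover have "s1 * (R * A * E1) = (I * E1) * (R * E1)"
  proof -
    have "s1 * (R * A * E1) = (s1 * A) * (R * E1)" by (simp only: mult_ac)
    also have "\<dots> = (I * E1) * (R * E1)" by (simp only: h1)
    finally show ?thesis .
  qed
  ultimately have "(I * E1) * (M * E2) \<le> (I * E1) * (R * E1)" by simp
  then have "M * E2 \<le> R * E1" using I E by simp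
  then show False using lt by simp
qed

lemma homology_eq:
  fixes D :: "'a::{field,finite}^'n \<Rightarrow> 'a^'n"
  assumes dD: "differential D"
  shows "homology_dim D + 2 * vec.dim (range D) = CARD('n)"
proof -
  note lin = differentialD(1)[OF dD] and DD = differentialD(2)[OF dD]
  have "range D \<subseteq> {x. D x = 0}" using DD by auto
  then have "vec.dim (range D) \<le> vec.dim {x. D x = 0}" by (rule vec.dim_subset)
  then show ?thesis using rank_nullity[OF lin] unfolding homology_dim_def by linarith
qed

lemma diff_count_Sk:
  assumes "r + 2*k = CARD('n::finite)"
  shows "diff_count TYPE('a::{field,finite}) TYPE('n) r = card (Sk TYPE('a) TYPE('n) k)"
proof -
  have "{D :: 'a^'n \<Rightarrow> 'a^'n. differential D \<and> homology_dim D = r} = Sk TYPE('a) TYPE('n) k"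
  proof (intro set_eqI)
    fix D :: "'a^'n \<Rightarrow> 'a^'n"
    show "D \<in> {D. differential D \<and> homology_dim D = r} \<longleftrightarrow> D \<in> Sk TYPE('a) TYPE('n) k"
    proof (cases "differential D")
      case True
      then have "homology_dim D + 2 * vec.dim (range D) = CARD('n)" by (rule homology_eq)
      then have "homology_dim D = r \<longleftrightarrow> vec.dim (range D) = k" using assms by linarith
      then show ?thesis using True by (simp add: Sk_def)
    next
      case False then show ?thesis by (simp add: Sk_def)
    qed
  qed
  then show ?thesis unfolding diff_count_def by simp
qed

theorem mainTheorem7:
  fixes r :: nat
  assumes "CARD('n::finite) \<ge> 2"
    and "r mod 2 = CARD('n) mod 2"
    and "r + 2 \<le> CARD('n)"
  shows "diff_count TYPE('a::{field,finite}) TYPE('n) (r + 2) < diff_count TYPE('a) TYPE('n) r"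
proof -
  let ?n = "CARD('n)" and ?q = "CARD('a)"
  define j where "j = (?n - r - 2) div 2"
  have nj: "?n = r + 2 + 2*j" using assms(2,3) unfolding j_def by presburger
  have c1: "diff_count TYPE('a) TYPE('n) (r + 2) = card (Sk TYPE('a) TYPE('n) j)"
    by (rule diff_count_Sk) (use nj in simp)
  have c2: "diff_count TYPE('a) TYPE('n) r = card (Sk TYPE('a) TYPE('n) (Suc j))"
    by (rule diff_count_Sk) (use nj in simp)
  define A where "A = (\<Prod>i<j. (?q^j - ?q^i) * ?q^(?n-j))"
  define R where "R = (?q^Suc j - 1) * ?q^(?n - Suc j)"
  define I where "I = (\<Prod>i<2*j. (?q^?n - ?q^i) * 1)"
  define M where "M = (?q^(r+2+2*j) - ?q^(2*j)) * (?q^(r+2+2*j) - ?q^(2*j+1))"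
  define E1 where "E1 = (?q^j)^(r+2)"
  define E2 where "E2 = (?q^Suc j)^r"
  have e1: "?n - 2*j = r + 2" using nj by simp
  have h1: "card (Sk TYPE('a) TYPE('n) j) * A = I * E1"
    using count_eq[where 'a='a and 'n='n and k=j] unfolding A_def I_def E1_def e1 .
  have AS: "(\<Prod>i<Suc j. (?q^Suc j - ?q^i) * ?q^(?n - Suc j)) = R * A"
    unfolding R_def A_def by (rule A_Suc) (use nj in simp)
  have IS: "(\<Prod>i<2*Suc j. (?q^?n - ?q^i) * 1) = I * M"
  proof -
    have t: "2 * Suc j = Suc (Suc (2*j))" by simp
    have "(\<Prod>i<2*Suc j. (?q^?n - ?q^i) * 1) = (\<Prod>i<2*j. (?q^?n - ?q^i) * 1) * ((?q^?n - ?q^(2*j)) * 1) * ((?q^?n - ?q^(Suc (2*j))) * 1)"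
      unfolding t by (simp only: prod.lessThan_Suc)
    also have "\<dots> = I * M" unfolding I_def M_def nj by (simp only: mult_1_right mult.assoc Suc_eq_plus1)
    finally show ?thesis .
  qed
  have e2: "?n - 2 * Suc j = r" using nj by simp
  have h2: "card (Sk TYPE('a) TYPE('n) (Suc j)) * (R * A) = (I * M) * E2"
  proof -
    have c: "card (Sk TYPE('a) TYPE('n) (Suc j)) * (\<Prod>i<Suc j. (?q^Suc j - ?q^i) * ?q^(?n - Suc j))
       = (\<Prod>i<2*Suc j. (?q^?n - ?q^i) * 1) * (?q^Suc j)^(?n - 2*Suc j)"
      by (rule count_eq)
    from c have "card (Sk TYPE('a) TYPE('n) (Suc j)) * (R * A) = (I * M) * (?q^Suc j)^(?n - 2*Suc j)"
      unfolding AS IS .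
    then have "card (Sk TYPE('a) TYPE('n) (Suc j)) * (R * A) = (I * M) * (?q^Suc j)^r"
      unfolding e2 .
    then show ?thesis unfolding E2_def .
  qed
  have q2: "?q \<ge> 2" by (rule card_field_ge2)
  have lt: "M * E2 > R * E1"
  proof -
    have eR: "?q^(?n - Suc j) = ?q^(r+2+2*j - Suc j)" by (simp only: nj)
    show ?thesis unfolding M_def E2_def R_def E1_def eR by (rule key_ineq[OF q2])
  qed
  have Ipos: "I > 0" unfolding I_def
  proof (rule prod_pos)
    fix i assume "i \<in> {..<2*j}"
    then have "i < ?n" using nj by simp
    then have "?q^i < ?q^?n" using q2 by (intro power_strict_increasing) auto
    then show "0 < (?q^?n - ?q^i) * 1" by simp
  qed
  have E1pos: "E1 > 0" unfolding E1_def using q2 by simp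
  show ?thesis unfolding c1 c2 by (rule final_arith[OF h1 h2 lt Ipos E1pos])
qed

end
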